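(* An algebra $(S,\sqcup,\cap)$ with two binary operations is an ado-semilattice if and only if: (1) $(S,\sqcup)$ is a left regular band; (2) $\cap$ is the semilattice meet with respect to the partial order $\leq$ given by $a\leq b$ iff $a\sqcup b=b$; (3) $a\sqcup(b\cap c)=(a\sqcup b)\cap(a\sqcup c)$ for all $a,b,c$; (4) $a\cap c\leq(a\cap b)\sqcup c$ for all $a,b,c$.
   Context: An o-semilattice is an algebra $(L,\cap,\sqcup)$ such that $(L,\cap)$ is a semilattice and, with $x\leq y$ iff $x=x\cap y$, for all $x,y,z$: (i) $x\leq x\sqcup y$; (ii) $(x\cap y)\sqcup(y\cap z)\leq y$; (iii) $x\sqcup y\leq x\sqcup(y\cap(x\sqcup y))$; (iv) $x\cap z\leq(x\cap y)\sqcup z$. It is distributive if $(a\cap d)\sqcup((b\cap d)\cap(c\cap d))=((a\cap d)\sqcup(b\cap d))\cap((a\cap d)\sqcup(c\cap d))$ for all $a,b,c,d$. An ado-semilattice is a distributive o-semilattice in which $\sqcup$ is associative. A left regular band is a set with a binary operation $\sqcup$ satisfying $a\sqcup(b\sqcup c)=(a\sqcup b)\sqcup c$, $a\sqcup a=a$, $a\sqcup b=(a\sqcup b)\sqcup a$; in a left regular band, $a\leq b$ iff $a\sqcup b=b$ defines a partial order. *)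

theory Defs
  imports Main
begin

definition is_semilattice :: "('a \<Rightarrow> 'a \<Rightarrow> 'a) \<Rightarrow> bool" where
  "is_semilattice m \<longleftrightarrow>
     (\<forall>x y z. m x (m y z) = m (m x y) z) \<and> (\<forall>x y. m x y = m y x) \<and> (\<forall>x. m x x = x)"

definition meet_le :: "('a \<Rightarrow> 'a \<Rightarrow> 'a) \<Rightarrow> 'a \<Rightarrow> 'a \<Rightarrow> bool" where
  "meet_le m x y \<longleftrightarrow> x = m x y"

definition o_semilattice :: "('a \<Rightarrow> 'a \<Rightarrow> 'a) \<Rightarrow> ('a \<Rightarrow> 'a \<Rightarrow> 'a) \<Rightarrow> bool" where
  "o_semilattice m j \<longleftrightarrow> is_semilattice m \<and>
     (\<forall>x y. meet_le m x (j x y)) \<and>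
     (\<forall>x y z. meet_le m (j (m x y) (m y z)) y) \<and>
     (\<forall>x y. meet_le m (j x y) (j x (m y (j x y)))) \<and>
     (\<forall>x y z. meet_le m (m x z) (j (m x y) z))"

definition o_distributive :: "('a \<Rightarrow> 'a \<Rightarrow> 'a) \<Rightarrow> ('a \<Rightarrow> 'a \<Rightarrow> 'a) \<Rightarrow> bool" where
  "o_distributive m j \<longleftrightarrow> (\<forall>a b c d.
     j (m a d) (m (m b d) (m c d)) = m (j (m a d) (m b d)) (j (m a d) (m c d)))"

definition ado_semilattice :: "('a \<Rightarrow> 'a \<Rightarrow> 'a) \<Rightarrow> ('a \<Rightarrow> 'a \<Rightarrow> 'a) \<Rightarrow> bool" where
  "ado_semilattice m j \<longleftrightarrow> o_semilattice m j \<and> o_distributive m j \<and>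
     (\<forall>x y z. j x (j y z) = j (j x y) z)"

definition left_regular_band :: "('a \<Rightarrow> 'a \<Rightarrow> 'a) \<Rightarrow> bool" where
  "left_regular_band j \<longleftrightarrow> (\<forall>a b c. j a (j b c) = j (j a b) c) \<and> (\<forall>a. j a a = a) \<and>
     (\<forall>a b. j a b = j (j a b) a)"

definition band_le :: "('a \<Rightarrow> 'a \<Rightarrow> 'a) \<Rightarrow> 'a \<Rightarrow> 'a \<Rightarrow> bool" where
  "band_le j a b \<longleftrightarrow> j a b = b"

definition is_meet_wrt :: "('a \<Rightarrow> 'a \<Rightarrow> bool) \<Rightarrow> ('a \<Rightarrow> 'a \<Rightarrow> 'a) \<Rightarrow> bool" where
  "is_meet_wrt le m \<longleftrightarrow> (\<forall>a b. le (m a b) a \<and> le (m a b) b \<and>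
     (\<forall>c. le c a \<and> le c b \<longrightarrow> le c (m a b)))"

end

theory Submission
  imports Defs
begin

lemma fwd:
  fixes j m :: "'a \<Rightarrow> 'a \<Rightarrow> 'a"
  assumes "ado_semilattice m j"
  shows "left_regular_band j \<and>
    is_meet_wrt (band_le j) m \<and>
    (\<forall>a b c. j a (m b c) = m (j a b) (j a c)) \<and>
    (\<forall>a b c. band_le j (m a c) (j (m a b) c))"
proof -
  have H: "(((\<forall>x y z. m x (m y z) = m (m x y) z) \<and> (\<forall>x y. m x y = m y x) \<and> (\<forall>x. m x x = x)) \<and>
    (\<forall>x y. x = m x (j x y)) \<and>
    (\<forall>x y z. j (m x y) (m y z) = m (j (m x y) (m y z)) y) \<and>
    (\<forall>x y. j x y = m (j x y) (j x (m y (j x y)))) \<and>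
    (\<forall>x y z. m x z = m (m x z) (j (m x y) z))) \<and>
    (\<forall>a b c d. j (m a d) (m (m b d) (m c d)) = m (j (m a d) (m b d)) (j (m a d) (m c d))) \<and>
    (\<forall>x y z. j x (j y z) = j (j x y) z)"
    using assms unfolding ado_semilattice_def o_semilattice_def is_semilattice_def
      meet_le_def o_distributive_def .
  have A: "\<And>x y z. m x (m y z) = m (m x y) z" using H by meson
  have C: "\<And>x y. m x y = m y x" using H by meson
  have I: "\<And>x. m x x = x" using H by meson
  have o1: "\<And>x y. x = m x (j x y)" using H by meson
  have o2: "\<And>x y z. j (m x y) (m y z) = m (j (m x y) (m y z)) y" using H by meson
  have o3: "\<And>x y. j x y = m (j x y) (j x (m y (j x y)))" using H by meson
  have o4: "\<And>x y z. m x z = m (m x z) (j (m x y) z)" using H by meson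
  have D: "\<And>a b c d. j (m a d) (m (m b d) (m c d)) = m (j (m a d) (m b d)) (j (m a d) (m c d))" using H by meson
  have J: "\<And>x y z. j x (j y z) = j (j x y) z" using H by meson
  have antisym: "x = y" if "x = m x y" "y = m y x" for x y
    using that C by metis
  have trans: "x = m x z" if "x = m x y" "y = m y z" for x y z
    using that A by metis
  have idem: "j y y = y" for y
  proof -
    have "j y y = m (j y y) y" using o2[of y y y] I by simp
    moreover have "y = m y (j y y)" by (rule o1)
    ultimately show ?thesis using antisym C by metis
  qed
  have ub: "j a b = m (j a b) y" if "a = m a y" "b = m b y" for a b y
    using o2[of a y b] that C by metis
  have le_iff: "band_le j x y \<longleftrightarrow> x = m x y" for x y
  proof
    assume "band_le j x y" then show "x = m x y" using o1[of x y] by (simp add: band_le_def)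
  next
    assume h: "x = m x y"
    have 1: "j x y = m (j x y) y" using ub[OF h] I by metis
    have "y = m y (j x y)" using o4[of y y x] I h C by metis
    then show "band_le j x y" using 1 antisym C unfolding band_le_def by metis
  qed
  have lrb: "j a b = j (j a b) a" for a b
  proof -
    have "j (j a b) a = m (j (j a b) a) (j a b)"
      using ub[of "j a b" "j a b" a] o1[of a b] I by metis
    moreover have "j a b = m (j a b) (j (j a b) a)" by (rule o1)
    ultimately show ?thesis using antisym C by metis
  qed
  have mono: "j x y = m (j x y) (j x z)" if "y = m y z" for x y z
  proof -
    have "j y z = z" using le_iff[of y z] that by (simp add: band_le_def)
    then have "j (j x y) (j x z) = j x z" using J lrb by metis
    then show ?thesis using le_iff by (simp add: band_le_def)
  qed
  have o3e: "j a (m b (j a b)) = j a b" for a b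
  proof -
    have "m b (j a b) = m (m b (j a b)) b" using A C I by metis
    then have "j a (m b (j a b)) = m (j a (m b (j a b))) (j a b)" using mono by blast
    then show ?thesis using o3[of a b] antisym C by metis
  qed
  have L: "j a (m b z) = z" if h1: "a = m a z" and h2: "z = m z (j a b)" for a b z
  proof -
    have "j (m a (j a b)) (m (m b (j a b)) (m z (j a b))) =
      m (j (m a (j a b)) (m b (j a b))) (j (m a (j a b)) (m z (j a b)))" by (rule D)
    moreover have "m a (j a b) = a" using o1 by metis
    moreover have "m z (j a b) = z" using h2 by metis
    moreover have "m (m b (j a b)) z = m b z" using h2 A C by metis
    moreover have "j a z = z" using le_iff[of a z] h1 by (simp add: band_le_def)
    ultimately show ?thesis using o3e C by (metis)
  qed
  have dist: "j a (m b c) = m (j a b) (j a c)" for a b c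
  proof -
    define e where "e = m (j a b) (j a c)"
    have ae: "a = m a e" unfolding e_def using o1 A by metis
    have e1: "e = m e (j a b)" unfolding e_def using A C I by metis
    have e2: "e = m e (j a c)" unfolding e_def using A I by metis
    have "j (m a e) (m (m b e) (m c e)) = m (j (m a e) (m b e)) (j (m a e) (m c e))" by (rule D)
    moreover have "j a (m b e) = e" using L[OF ae e1] by simp
    moreover have "j a (m c e) = e" using L[OF ae e2] by simp
    ultimately have "j a (m (m b e) (m c e)) = e" using ae I by metis
    moreover have "m (m b e) (m c e) = m (m (m b e) (m c e)) (m b c)" using A C I by metis
    ultimately have r1: "e = m e (j a (m b c))" using mono by metis
    have "j a (m b c) = m (j a (m b c)) (j a b)" using mono A C I by metis
    moreover have "j a (m b c) = m (j a (m b c)) (j a c)" using mono A C I by metis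
    ultimately have "j a (m b c) = m (j a (m b c)) e" unfolding e_def using A by metis
    then show ?thesis using r1 antisym C e_def by metis
  qed
  show ?thesis
  proof (intro conjI allI)
    show "left_regular_band j" unfolding left_regular_band_def
      by (intro conjI allI) (rule J, rule idem, rule lrb)
    show "is_meet_wrt (band_le j) m" unfolding is_meet_wrt_def le_iff
    proof (intro allI conjI impI)
      fix a b c
      have "m (m a b) a = m a (m a b)" by (rule C)
      also have "\<dots> = m (m a a) b" by (rule A)
      also have "\<dots> = m a b" by (simp only: I)
      finally show "m a b = m (m a b) a" by (rule sym)
      have "m (m a b) b = m a (m b b)" by (rule A[symmetric])
      also have "\<dots> = m a b" by (simp only: I)
      finally show "m a b = m (m a b) b" by (rule sym)
      assume h: "c = m c a \<and> c = m c b"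
      then have c1: "c = m c a" and c2: "c = m c b" by blast+
      have "m c b = m (m c a) b" using c1 by (rule arg_cong)
      with c2 have "c = m (m c a) b" by (rule HOL.trans)
      also have "\<dots> = m c (m a b)" by (rule A[symmetric])
      finally show "c = m c (m a b)" .
    qed
    show "j a (m b c) = m (j a b) (j a c)" for a b c by (rule dist)
    show "band_le j (m a c) (j (m a b) c)" for a b c unfolding le_iff by (rule o4)
  qed
qed

lemma bwd:
  fixes j m :: "'a \<Rightarrow> 'a \<Rightarrow> 'a"
  assumes "left_regular_band j \<and>
    is_meet_wrt (band_le j) m \<and>
    (\<forall>a b c. j a (m b c) = m (j a b) (j a c)) \<and>
    (\<forall>a b c. band_le j (m a c) (j (m a b) c))"
  shows "ado_semilattice m j"
proof -
  have J: "\<And>a b c. j a (j b c) = j (j a b) c" and idem: "\<And>a. j a a = a"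
    and lrb: "\<And>a b. j a b = j (j a b) a"
    and g1: "\<And>a b. band_le j (m a b) a" and g2: "\<And>a b. band_le j (m a b) b"
    and g3: "\<And>a b c. band_le j c a \<Longrightarrow> band_le j c b \<Longrightarrow> band_le j c (m a b)"
    and dist: "\<And>a b c. j a (m b c) = m (j a b) (j a c)"
    and o4: "\<And>a b c. band_le j (m a c) (j (m a b) c)"
    using assms unfolding left_regular_band_def is_meet_wrt_def by blast+
  have refl: "band_le j a a" for a using idem by (simp add: band_le_def)
  have antisym: "a = b" if h1: "band_le j a b" and h2: "band_le j b a" for a b
  proof -
    have "b = j a b" using h1 by (simp add: band_le_def)
    also have "\<dots> = j (j a b) a" by (rule lrb)
    also have "\<dots> = j b a" using h1 by (simp add: band_le_def)
    also have "\<dots> = a" using h2 by (simp add: band_le_def)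
    finally show ?thesis by (rule sym)
  qed
  have trans: "band_le j a c" if h1: "band_le j a b" and h2: "band_le j b c" for a b c
  proof -
    have "j a c = j a (j b c)" using h2 by (simp add: band_le_def)
    also have "\<dots> = j (j a b) c" by (rule J)
    also have "\<dots> = j b c" using h1 by (simp add: band_le_def)
    also have "\<dots> = c" using h2 by (simp add: band_le_def)
    finally show ?thesis by (simp add: band_le_def)
  qed
  have C: "m x y = m y x" for x y by (rule antisym[OF g3[OF g2 g1] g3[OF g2 g1]])
  have I: "m x x = x" for x by (rule antisym[OF g1 g3[OF refl refl]])
  have A: "m x (m y z) = m (m x y) z" for x y z
    by (rule antisym[OF g3[OF g3[OF g1 trans[OF g2 g1]] trans[OF g2 g2]]
                        g3[OF trans[OF g1 g1] g3[OF trans[OF g1 g2] g2]]])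
  have le_iff: "band_le j x y \<longleftrightarrow> x = m x y" for x y
  proof
    assume h: "band_le j x y"
    show "x = m x y" by (rule antisym[OF g3[OF refl h] g1])
  next
    assume h: "x = m x y"
    have "band_le j (m x y) y" by (rule g2)
    then show "band_le j x y" using h by simp
  qed
  have ub: "band_le j (j a b) c" if h1: "band_le j a c" and h2: "band_le j b c" for a b c
  proof -
    have "j (j a b) c = j a (j b c)" by (rule J[symmetric])
    also have "\<dots> = j a c" using h2 by (simp add: band_le_def)
    also have "\<dots> = c" using h1 by (simp add: band_le_def)
    finally show ?thesis by (simp add: band_le_def)
  qed
  have o1: "band_le j x (j x y)" for x y
  proof -
    have "j x (j x y) = j (j x x) y" by (rule J)
    then show ?thesis by (simp add: band_le_def idem)
  qed
  show ?thesis
    unfolding ado_semilattice_def o_semilattice_def is_semilattice_def o_distributive_def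
      meet_le_def le_iff[symmetric]
  proof (intro conjI allI)
    show "m x (m y z) = m (m x y) z" for x y z by (rule A)
    show "m x y = m y x" for x y by (rule C)
    show "m x x = x" for x by (rule I)
    show "band_le j x (j x y)" for x y by (rule o1)
    show "band_le j (j (m x y) (m y z)) y" for x y z by (rule ub[OF g2 g1])
    show "band_le j (j x y) (j x (m y (j x y)))" for x y
    proof -
      have "j x (j x y) = j x y" using J idem by metis
      then have "j x (m y (j x y)) = j x y" using dist[of x y "j x y"] I by simp
      then show ?thesis using refl by simp
    qed
    show "band_le j (m x z) (j (m x y) z)" for x y z by (rule o4)
    show "j (m a d) (m (m b d) (m c d)) = m (j (m a d) (m b d)) (j (m a d) (m c d))" for a b c d
      by (rule dist)
    show "j x (j y z) = j (j x y) z" for x y z by (rule J)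
  qed
qed

theorem corollary3p3:
  fixes j m :: "'a \<Rightarrow> 'a \<Rightarrow> 'a"
  shows "ado_semilattice m j \<longleftrightarrow>
    left_regular_band j \<and>
    is_meet_wrt (band_le j) m \<and>
    (\<forall>a b c. j a (m b c) = m (j a b) (j a c)) \<and>
    (\<forall>a b c. band_le j (m a c) (j (m a b) c))"
  by (rule iffI) (erule fwd, erule bwd)

end
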